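(* Let $Z\in\mathfrak{h}_2$, $A=\mathbb{C}^2/(Z\mathbb{Z}^2+\mathrm{diag}(1,4)\mathbb{Z}^2)$, $L_0$ the polarising line bundle of characteristic $0$ on $A$ with respect to $\mathbb{C}^2=Z\mathbb{R}^2+\mathbb{R}^2$, and $C_A=\{\theta_A=0\}$ where $\theta_A=\theta\begin{bmatrix}3\omega\\0\end{bmatrix}(\cdot,Z)-\theta\begin{bmatrix}\omega\\0\end{bmatrix}(\cdot,Z)$, $\omega=(0,\tfrac14)$. Then $C_A$ is invariant under translation by every element of the subgroup $K(L_0)\cap A[2]$, which is isomorphic to the Klein group $\mathbb{Z}_2\times\mathbb{Z}_2$.
   Context: $K(L_0)$ is the kernel of the isogeny $\phi_{L_0}:A\to\widehat{A}$, $a\mapsto t_a^*L_0\otimes L_0^{-1}$; $A[2]$ is the group of $2$-torsion points. Classical theta functions: $\theta\begin{bmatrix}c_1\\c_2\end{bmatrix}(v,Z)=\sum_{l\in\mathbb{Z}^2}\exp\big(\pi i\,{}^t(l+c_1)Z(l+c_1)+2\pi i\,{}^t(l+c_1)(v+c_2)\big)$. *)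

theory Defs
  imports "HOL-Analysis.Analysis" "HOL-Algebra.Elementary_Groups" "HOL-Algebra.Coset"
begin

definition ImM :: "complex^2^2 \<Rightarrow> real^2^2" where
  "ImM Z = (\<chi> i j. Im (Z $ i $ j))"

definition siegel_h2 :: "complex^2^2 \<Rightarrow> bool" where
  "siegel_h2 Z \<longleftrightarrow> transpose Z = Z \<and>
     (\<forall>x::real^2. x \<noteq> 0 \<longrightarrow> x \<bullet> (ImM Z *v x) > 0)"

definition cvec_of_int :: "int^2 \<Rightarrow> complex^2" where
  "cvec_of_int m = (\<chi> i. of_int (m $ i))"

definition diag14 :: "complex^2^2" where
  "diag14 = (\<chi> i j. if i = j then (if i = 1 then 1 else 4) else 0)"

definition lattice :: "complex^2^2 \<Rightarrow> (complex^2) set" where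
  "lattice Z = {Z *v cvec_of_int m + diag14 *v cvec_of_int n | m n. True}"

definition theta :: "real^2 \<Rightarrow> real^2 \<Rightarrow> complex^2 \<Rightarrow> complex^2^2 \<Rightarrow> complex" where
  "theta c1 c2 v Z = infsum (\<lambda>l::int^2.
     let u = (\<chi> i. complex_of_real (of_int (l $ i) + c1 $ i)) in
     exp (pi * \<i> * (\<Sum>i\<in>UNIV. \<Sum>j\<in>UNIV. u $ i * Z $ i $ j * u $ j)
          + 2 * pi * \<i> * (\<Sum>i\<in>UNIV. u $ i * (v $ i + complex_of_real (c2 $ i))))) UNIV"

definition omega :: "real^2" where
  "omega = vector [0, 1/4]"

definition theta_A :: "complex^2^2 \<Rightarrow> complex^2 \<Rightarrow> complex" where
  "theta_A Z v = theta (3 *\<^sub>R omega) 0 v Z - theta omega 0 v Z"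

text \<open>Hermitian form H(v,w) = v^t (Im Z)^{-1} conj w = first Chern class of L_0 (Appell-Humbert),
  and its imaginary part E, the alternating Riemann form.\<close>
definition hermH :: "complex^2^2 \<Rightarrow> complex^2 \<Rightarrow> complex^2 \<Rightarrow> complex" where
  "hermH Z v w = (\<Sum>i\<in>UNIV. \<Sum>j\<in>UNIV.
      v $ i * complex_of_real (matrix_inv (ImM Z) $ i $ j) * cnj (w $ j))"

definition riemE :: "complex^2^2 \<Rightarrow> complex^2 \<Rightarrow> complex^2 \<Rightarrow> real" where
  "riemE Z v w = Im (hermH Z v w)"

text \<open>Preimage in C^2 of K(L_0) = Lambda(L_0)/Lambda, Lambda(L_0) = {v. E(v, Lambda) \<subseteq> Z}.\<close>
definition K_lift :: "complex^2^2 \<Rightarrow> (complex^2) set" where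
  "K_lift Z = {v. \<forall>w\<in>lattice Z. riemE Z v w \<in> \<int>}"

definition two_torsion_lift :: "complex^2^2 \<Rightarrow> (complex^2) set" where
  "two_torsion_lift Z = {v. v + v \<in> lattice Z}"

definition KA2_group :: "complex^2^2 \<Rightarrow> (complex^2) set monoid" where
  "KA2_group Z = \<lparr>carrier = K_lift Z \<inter> two_torsion_lift Z, mult = (+), one = 0\<rparr> Mod lattice Z"

end

theory Submission
  imports Defs
begin

definition cv :: "real^2 \<Rightarrow> complex^2" where "cv x = (\<chi> i. complex_of_real (x $ i))"
definition vRe :: "complex^2 \<Rightarrow> real^2" where "vRe v = (\<chi> i. Re (v $ i))"
definition vIm :: "complex^2 \<Rightarrow> real^2" where "vIm v = (\<chi> i. Im (v $ i))"
definition ReM :: "complex^2^2 \<Rightarrow> real^2^2" where "ReM Z = (\<chi> i j. Re (Z $ i $ j))"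

lemma vRe_add: "vRe (x + y) = vRe x + vRe y" and vIm_add: "vIm (x + y) = vIm x + vIm y"
  by (simp_all add: vRe_def vIm_def vec_eq_iff)
lemma vRe_cv[simp]: "vRe (cv b) = b" and vIm_cv[simp]: "vIm (cv b) = 0"
  by (simp_all add: vRe_def vIm_def cv_def vec_eq_iff)
lemma vRe_Zcv: "vRe (Z *v cv a) = ReM Z *v a" and vIm_Zcv: "vIm (Z *v cv a) = ImM Z *v a"
  by (simp_all add: vRe_def vIm_def cv_def vec_eq_iff ReM_def ImM_def matrix_vector_mult_def Re_sum Im_sum)

lemma inv_ImM:
  assumes "siegel_h2 Z"
  shows "matrix_inv (ImM Z) ** ImM Z = mat 1 \<and> ImM Z ** matrix_inv (ImM Z) = mat 1"
proof -
  have "inj ((*v) (ImM Z))"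
  proof (rule injI)
    fix x y assume "ImM Z *v x = ImM Z *v y"
    then have "ImM Z *v (x - y) = 0" by (simp add: matrix_vector_mult_diff_distrib)
    then show "x = y" using assms unfolding siegel_h2_def
      by (metis inner_zero_right less_irrefl right_minus_eq)
  qed
  then have "invertible (ImM Z)"
    using matrix_left_invertible_injective invertible_left_inverse by blast
  then show ?thesis unfolding matrix_inv_def invertible_def
    by (rule someI_ex[where P="\<lambda>A'. ImM Z ** A' = mat 1 \<and> A' ** ImM Z = mat 1", THEN conjE]) auto
qed

lemma riemE_vec:
  "riemE Z t w = vIm t \<bullet> (matrix_inv (ImM Z) *v vRe w) - vRe t \<bullet> (matrix_inv (ImM Z) *v vIm w)"
  unfolding riemE_def hermH_def vRe_def vIm_def inner_vec_def matrix_vector_mult_def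
  by (simp add: sum_2 Im_sum algebra_simps)

lemma transp_parts:
  assumes "siegel_h2 Z"
  shows "transpose (ImM Z) = ImM Z" "transpose (ReM Z) = ReM Z"
  using assms unfolding siegel_h2_def transpose_def ImM_def ReM_def
  by (auto simp: vec_eq_iff)

lemma dot_sym_mat: "transpose A = A \<Longrightarrow> (A *v x) \<bullet> y = x \<bullet> (A *v (y::real^2))"
  by (metis dot_lmul_matrix vector_transpose_matrix inner_commute)

lemma riemE_formula:
  assumes "siegel_h2 Z"
  shows "riemE Z (Z *v cv a + cv b) (Z *v cv c + cv d) = a \<bullet> d - b \<bullet> c"
proof -
  let ?M = "matrix_inv (ImM Z)" and ?Y = "ImM Z" and ?X = "ReM Z"
  note I = inv_ImM[OF assms] and T = transp_parts[OF assms]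
  have 1: "(?Y *v a) \<bullet> (?M *v u) = a \<bullet> u" for u
    by (simp add: dot_sym_mat[OF T(1)] matrix_vector_mul_assoc I)
  have 2: "?M *v (?Y *v c) = c"
    by (simp add: matrix_vector_mul_assoc I)
  show ?thesis
    unfolding riemE_vec vRe_add vIm_add vRe_Zcv vIm_Zcv vRe_cv vIm_cv
    by (simp add: matrix_vector_right_distrib inner_add_left inner_add_right 1 2 dot_sym_mat[OF T(2)])
qed

lemma theta_shift_char:
  fixes k :: "int^2"
  shows "theta (c1 + (\<chi> i. of_int (k $ i))) c2 v Z = theta c1 c2 v Z"
proof -
  let ?f = "\<lambda>l::int^2. let u = (\<chi> i. complex_of_real (of_int (l $ i) + c1 $ i)) in
     exp (pi * \<i> * (\<Sum>i\<in>UNIV. \<Sum>j\<in>UNIV. u $ i * Z $ i $ j * u $ j)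
          + 2 * pi * \<i> * (\<Sum>i\<in>UNIV. u $ i * (v $ i + complex_of_real (c2 $ i))))"
  have bij: "bij_betw (\<lambda>l. l + k) UNIV UNIV"
    by (rule bij_betwI[where g="\<lambda>l. l - k"]) auto
  have "theta (c1 + (\<chi> i. of_int (k $ i))) c2 v Z = infsum (\<lambda>l. ?f (l + k)) UNIV"
    unfolding theta_def by (rule infsum_cong) (simp add: add.assoc add.commute add.left_commute)
  also have "\<dots> = infsum ?f UNIV" by (rule infsum_reindex_bij_betw[OF bij])
  finally show ?thesis unfolding theta_def .
qed

lemma theta_transl_real:
  fixes b :: "real^2"
  assumes "\<forall>i. b $ i \<in> \<int>"
  shows "theta c1 0 (v + cv b) Z = exp (2 * pi * \<i> * complex_of_real (c1 \<bullet> b)) * theta c1 0 v Z"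
proof -
  have one: "exp (2 * pi * \<i> * complex_of_real (of_int (l $ 1) * b $ 1 + of_int (l $ 2) * b $ 2)) = 1" for l :: "int^2"
  proof -
    have "of_int (l $ 1) * b $ 1 + of_int (l $ 2) * b $ 2 \<in> \<int>" using assms by auto
    from exp_integer_2pi[OF this] show ?thesis by (simp add: mult_ac)
  qed
  then have pw: "exp (A + 2 * pi * \<i> * ((complex_of_real (of_int (l $ 1) + c1 $ 1)) * (v $ 1 + complex_of_real (b $ 1))
       + (complex_of_real (of_int (l $ 2) + c1 $ 2)) * (v $ 2 + complex_of_real (b $ 2))))
     = exp (2 * pi * \<i> * complex_of_real (c1 $ 1 * b $ 1 + c1 $ 2 * b $ 2)) *
       exp (A + 2 * pi * \<i> * ((complex_of_real (of_int (l $ 1) + c1 $ 1)) * v $ 1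
       + (complex_of_real (of_int (l $ 2) + c1 $ 2)) * v $ 2))" for l :: "int^2" and A
  proof -
    have "exp (A + 2 * pi * \<i> * ((complex_of_real (of_int (l $ 1) + c1 $ 1)) * (v $ 1 + complex_of_real (b $ 1))
       + (complex_of_real (of_int (l $ 2) + c1 $ 2)) * (v $ 2 + complex_of_real (b $ 2))))
      = exp (2 * pi * \<i> * complex_of_real (of_int (l $ 1) * b $ 1 + of_int (l $ 2) * b $ 2)) *
       (exp (2 * pi * \<i> * complex_of_real (c1 $ 1 * b $ 1 + c1 $ 2 * b $ 2)) *
       exp (A + 2 * pi * \<i> * ((complex_of_real (of_int (l $ 1) + c1 $ 1)) * v $ 1
       + (complex_of_real (of_int (l $ 2) + c1 $ 2)) * v $ 2)))"
      unfolding mult_exp_exp by (rule arg_cong[where f=exp]) (simp add: algebra_simps)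
    then show ?thesis using one[of l] by simp
  qed
  show ?thesis
    unfolding theta_def
    apply (subst infsum_cmult_right'[symmetric])
    apply (rule infsum_cong)
    apply (simp add: sum_2 cv_def inner_vec_def Let_def)
    using pw by simp
qed

lemma theta_transl_Z:
  fixes a :: "real^2"
  assumes sym: "Z $ 1 $ 2 = Z $ 2 $ 1"
  shows "theta c1 0 (v + Z *v cv a) Z =
    exp (- (pi * \<i> * (\<Sum>i\<in>UNIV. \<Sum>j\<in>UNIV. cv a $ i * Z $ i $ j * cv a $ j)
            + 2 * pi * \<i> * (\<Sum>i\<in>UNIV. cv a $ i * v $ i))) * theta (c1 + a) 0 v Z"
  unfolding theta_def
  apply (subst infsum_cmult_right'[symmetric])
  apply (rule infsum_cong)
  apply (simp add: sum_2 cv_def Let_def matrix_vector_mult_def mult_exp_exp)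
  apply (rule arg_cong[where f=exp])
  apply (simp add: algebra_simps sym)
  done

lemma Zsym: "siegel_h2 Z \<Longrightarrow> Z $ 1 $ 2 = Z $ 2 $ 1"
  unfolding siegel_h2_def transpose_def by (metis vec_lambda_beta)

lemma theta_transl_both:
  assumes "siegel_h2 Z" "\<forall>i. b $ i \<in> \<int>"
  shows "theta c 0 (v + (Z *v cv a + cv b)) Z =
    exp (- (pi * \<i> * (\<Sum>i\<in>UNIV. \<Sum>j\<in>UNIV. cv a $ i * Z $ i $ j * cv a $ j)
            + 2 * pi * \<i> * (\<Sum>i\<in>UNIV. cv a $ i * (v + cv b) $ i))) *
    (exp (2 * pi * \<i> * complex_of_real ((c + a) \<bullet> b)) * theta (c + a) 0 v Z)"
proof -
  have eq: "v + (Z *v cv a + cv b) = (v + cv b) + Z *v cv a" by (simp add: add_ac)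
  show ?thesis unfolding eq
    using theta_transl_Z[OF Zsym[OF assms(1)], of c "v + cv b" a]
      theta_transl_real[OF assms(2), of "c + a" v Z] by simp
qed

lemma exp_shift_int:
  assumes "y - x \<in> \<int>"
  shows "exp (2 * pi * \<i> * complex_of_real y) = exp (2 * pi * \<i> * complex_of_real x)"
proof -
  have "exp (2 * pi * \<i> * complex_of_real y) = exp (2 * pi * \<i> * complex_of_real x) *
      exp (complex_of_real (2 * (y - x) * pi) * \<i>)"
    unfolding mult_exp_exp by (rule arg_cong[where f=exp]) (simp add: algebra_simps)
  then show ?thesis using exp_integer_2pi[OF assms] by simp
qed

lemma inv_main:
  fixes p j q k :: int
  assumes S: "siegel_h2 Z"
    and t: "t = Z *v cv (vector [of_int p, of_int j / 2]) + cv (vector [of_int q, 2 * of_int k])"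
  shows "theta_A Z (v + t) = 0 \<longleftrightarrow> theta_A Z v = 0"
proof -
  define a :: "real^2" where "a = vector [of_int p, of_int j / 2]"
  define b :: "real^2" where "b = vector [of_int q, 2 * of_int k]"
  have bint: "\<forall>i. b $ i \<in> \<int>" unfolding b_def by (simp add: forall_2)
  define K where "K = exp (- (pi * \<i> * (\<Sum>i\<in>UNIV. \<Sum>j\<in>UNIV. cv a $ i * Z $ i $ j * cv a $ j)
            + 2 * pi * \<i> * (\<Sum>i\<in>UNIV. cv a $ i * (v + cv b) $ i)))"
  define E where "E = exp (2 * pi * \<i> * complex_of_real ((omega + a) \<bullet> b))"
  have E3: "exp (2 * pi * \<i> * complex_of_real ((3 *\<^sub>R omega + a) \<bullet> b)) = E"
    unfolding E_def
    by (rule exp_shift_int) (simp add: a_def b_def omega_def inner_vec_def sum_2 algebra_simps)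
  have tA: "theta_A Z (v + t) = K * E * (theta (3 *\<^sub>R omega + a) 0 v Z - theta (omega + a) 0 v Z)"
    unfolding theta_A_def t a_def[symmetric] b_def[symmetric]
      theta_transl_both[OF S bint] K_def[symmetric] E3 E_def[symmetric]
    by (simp add: algebra_simps)
  have KE: "K * E \<noteq> 0" unfolding K_def E_def by simp
  consider r where "j = 2 * r" | r where "j = 2 * r + 1" by (metis oddE evenE)
  then show ?thesis
  proof cases
    case 1
    have e1: "omega + a = omega + (\<chi> i. of_int ((vector [p, r] :: int^2) $ i))"
      and e2: "3 *\<^sub>R omega + a = 3 *\<^sub>R omega + (\<chi> i. of_int ((vector [p, r] :: int^2) $ i))"
      unfolding a_def 1 by (auto simp: vec_eq_iff forall_2)
    show ?thesis unfolding tA e1 e2 theta_shift_char using KE by (simp add: theta_A_def)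
  next
    case 2
    have e1: "omega + a = 3 *\<^sub>R omega + (\<chi> i. of_int ((vector [p, r] :: int^2) $ i))"
      and e2: "3 *\<^sub>R omega + a = omega + (\<chi> i. of_int ((vector [p, r + 1] :: int^2) $ i))"
      unfolding a_def 2 by (auto simp: vec_eq_iff forall_2 omega_def field_simps)
    show ?thesis unfolding tA e1 e2 theta_shift_char using KE
      by (simp add: theta_A_def right_diff_distrib) (metis minus_diff_eq neg_equal_0_iff_equal)
  qed
qed

definition rep :: "complex^2^2 \<Rightarrow> int \<Rightarrow> int \<Rightarrow> int \<Rightarrow> int \<Rightarrow> complex^2" where
  "rep Z p j q k = Z *v cv (vector [of_int p, of_int j / 2]) + cv (vector [of_int q, 2 * of_int k])"

lemma cv_add: "cv (x + y) = cv x + cv y" and cv_neg: "cv (- x) = - cv x"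
  by (simp_all add: cv_def vec_eq_iff)

lemma rep_add: "rep Z p j q k + rep Z p' j' q' k' = rep Z (p+p') (j+j') (q+q') (k+k')"
proof -
  have 1: "vector [of_int p, of_int j / 2] + vector [of_int p', of_int j' / 2] =
     (vector [of_int (p+p'), of_int (j+j') / 2] :: real^2)"
   and 2: "vector [of_int q, 2 * of_int k] + vector [of_int q', 2 * of_int k'] =
     (vector [of_int (q+q'), 2 * of_int (k+k')] :: real^2)"
    by (auto simp: vec_eq_iff forall_2 field_simps)
  show ?thesis unfolding rep_def 1[symmetric] 2[symmetric] cv_add
    by (simp add: matrix_vector_right_distrib add_ac)
qed

lemma rep_neg: "- rep Z p j q k = rep Z (-p) (-j) (-q) (-k)"
proof -
  have 1: "- vector [of_int p, of_int j / 2] = (vector [of_int (-p), of_int (-j) / 2] :: real^2)"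
   and 2: "- vector [of_int q, 2 * of_int k] = (vector [of_int (-q), 2 * of_int (-k)] :: real^2)"
    by (auto simp: vec_eq_iff forall_2 field_simps)
  show ?thesis unfolding rep_def 1[symmetric] 2[symmetric] cv_neg
    by (simp add: vec_eq_iff forall_2 matrix_vector_mult_def sum_2 algebra_simps)
qed

lemma rep_zero: "rep Z 0 0 0 0 = 0"
proof -
  have "(vector [0, 0] :: real^2) = 0" by (auto simp: vec_eq_iff forall_2)
  then show ?thesis by (simp add: rep_def cv_def vec_eq_iff matrix_vector_mult_def)
qed

lemma lat_conv:
  "Z *v cvec_of_int m + diag14 *v cvec_of_int n =
   Z *v cv (vector [of_int (m $ 1), of_int (m $ 2)]) + cv (vector [of_int (n $ 1), 4 * of_int (n $ 2)])"
  by (simp add: vec_eq_iff forall_2 matrix_vector_mult_def sum_2 cv_def cvec_of_int_def diag14_def)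

lemma lattice_rep: "t \<in> lattice Z \<longleftrightarrow> (\<exists>p r q s. t = rep Z p (2*r) q (2 * s))"
proof
  assume "t \<in> lattice Z"
  then obtain m n where "t = Z *v cvec_of_int m + diag14 *v cvec_of_int n" unfolding lattice_def by blast
  then have "t = rep Z (m$1) (2*(m$2)) (n$1) (2*(n$2))" unfolding lat_conv rep_def by simp
  then show "\<exists>p r q s. t = rep Z p (2*r) q (2 * s)" by blast
next
  assume "\<exists>p r q s. t = rep Z p (2*r) q (2 * s)"
  then obtain p r q s where t: "t = rep Z p (2*r) q (2 * s)" by blast
  have "t = Z *v cvec_of_int (vector [p, r]) + diag14 *v cvec_of_int (vector [q, s])"
    unfolding lat_conv t rep_def by simp
  then show "t \<in> lattice Z" unfolding lattice_def by blast
qed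

lemma riemE_rep:
  assumes "siegel_h2 Z"
  shows "riemE Z (rep Z p j q k) (Z *v cv (vector [m1, m2]) + cv (vector [n1, n2])) =
     of_int p * n1 + of_int j / 2 * n2 - of_int q * m1 - 2 * of_int k * m2"
  unfolding rep_def riemE_formula[OF assms] by (simp add: inner_vec_def sum_2)

lemma S_char:
  assumes S: "siegel_h2 Z"
  shows "t \<in> K_lift Z \<inter> two_torsion_lift Z \<longleftrightarrow> (\<exists>p j q k. t = rep Z p j q k)"
proof
  assume t: "t \<in> K_lift Z \<inter> two_torsion_lift Z"
  then obtain m n where mn: "t + t = Z *v cvec_of_int m + diag14 *v cvec_of_int n"
    unfolding two_torsion_lift_def lattice_def by blast
  let ?a = "vector [of_int (m $ 1) / 2, of_int (m $ 2) / 2] :: real^2"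
  let ?b = "vector [of_int (n $ 1) / 2, 2 * of_int (n $ 2)] :: real^2"
  have tr: "t = Z *v cv ?a + cv ?b"
  proof -
    have e: "(Z *v cv ?a + cv ?b) + (Z *v cv ?a + cv ?b) = t + t" unfolding mn
      by (simp add: vec_eq_iff forall_2 matrix_vector_mult_def sum_2 cv_def cvec_of_int_def diag14_def
         algebra_simps)
    have "x + x = y + y \<Longrightarrow> x = y" for x y :: "complex^2"
      by (simp add: vec_eq_iff)
    from this[OF e] show ?thesis by simp
  qed
  have w1: "Z *v cv (vector [0, 0]) + cv (vector [1, 0]) \<in> lattice Z"
    and w2: "Z *v cv (vector [1, 0]) + cv (vector [0, 0]) \<in> lattice Z"
    unfolding lattice_def
     apply (rule CollectI, rule exI[of _ "vector [0,0]"], rule exI[of _ "vector [1,0]"], simp add: lat_conv)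
    apply (rule CollectI, rule exI[of _ "vector [1,0]"], rule exI[of _ "vector [0,0]"], simp add: lat_conv)
    done
  have "riemE Z t (Z *v cv (vector [0, 0]) + cv (vector [1, 0])) \<in> \<int>"
       "riemE Z t (Z *v cv (vector [1, 0]) + cv (vector [0, 0])) \<in> \<int>"
    using t w1 w2 unfolding K_lift_def by auto
  then have h1: "of_int (m $ 1) / 2 \<in> (\<int>::real set)" and h2': "- (of_int (n $ 1) / 2) \<in> (\<int>::real set)"
    unfolding tr riemE_formula[OF S] by (simp_all add: inner_vec_def sum_2)
  have h2: "of_int (n $ 1) / 2 \<in> (\<int>::real set)" using Ints_minus[OF h2'] by simp
  obtain p where p: "of_int (m $ 1) / 2 = (of_int p :: real)" using h1 by (metis Ints_cases)
  obtain q where q: "of_int (n $ 1) / 2 = (of_int q :: real)" using h2 by (metis Ints_cases)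
  have "t = rep Z p (m $ 2) q (n $ 2)" unfolding tr rep_def p q by simp
  then show "\<exists>p j q k. t = rep Z p j q k" by blast
next
  assume "\<exists>p j q k. t = rep Z p j q k"
  then obtain p j q k where t: "t = rep Z p j q k" by blast
  have "riemE Z t w \<in> \<int>" if "w \<in> lattice Z" for w
  proof -
    from that obtain m n where w: "w = Z *v cvec_of_int m + diag14 *v cvec_of_int n" unfolding lattice_def by blast
    have "riemE Z t w = of_int (p * n$1 + 2 * j * n$2 - q * m$1 - 2 * k * m$2)"
      unfolding t w lat_conv riemE_rep[OF S] by (simp add: algebra_simps)
    then show ?thesis by simp
  qed
  moreover have "t + t \<in> lattice Z"
  proof -
    have "t + t = rep Z (2*p) (2*j) (2*q) (2*k)" unfolding t rep_add mult_2 by (rule refl)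
    then show ?thesis unfolding lattice_rep by blast
  qed
  ultimately show "t \<in> K_lift Z \<inter> two_torsion_lift Z" unfolding K_lift_def two_torsion_lift_def by blast
qed

definition phiK :: "complex^2^2 \<Rightarrow> complex^2 \<Rightarrow> int \<times> int" where
  "phiK Z t = (\<lfloor>riemE Z t (Z *v cv (vector [0, 0]) + cv (vector [0, 4])) / 2\<rfloor> mod 2,
               \<lfloor>riemE Z t (Z *v cv (vector [0, 1]) + cv (vector [0, 0])) / 2\<rfloor> mod 2)"

lemma phiK_rep:
  assumes "siegel_h2 Z"
  shows "phiK Z (rep Z p j q k) = (j mod 2, (- k) mod 2)"
  unfolding phiK_def riemE_rep[OF assms] by simp

theorem corollary3p5:
  fixes Z :: "complex^2^2"
  assumes "siegel_h2 Z"
  shows "(\<forall>t\<in>K_lift Z \<inter> two_torsion_lift Z. \<forall>v::complex^2.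
            theta_A Z (v + t) = 0 \<longleftrightarrow> theta_A Z v = 0)
       \<and> KA2_group Z \<cong> (integer_mod_group 2 \<times>\<times> integer_mod_group 2)"
proof
  note S = assms
  show "\<forall>t\<in>K_lift Z \<inter> two_torsion_lift Z. \<forall>v::complex^2.
            theta_A Z (v + t) = 0 \<longleftrightarrow> theta_A Z v = 0"
  proof (intro ballI allI)
    fix t v assume "t \<in> K_lift Z \<inter> two_torsion_lift Z"
    then obtain p j q k where "t = rep Z p j q k" using S_char[OF S] by blast
    then show "theta_A Z (v + t) = 0 \<longleftrightarrow> theta_A Z v = 0"
      using inv_main[OF S] unfolding rep_def by blast
  qed
  define G0 :: "(complex^2) monoid" where
    "G0 = \<lparr>carrier = K_lift Z \<inter> two_torsion_lift Z, mult = (+), one = 0\<rparr>"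
  define H where "H = integer_mod_group 2 \<times>\<times> integer_mod_group 2"
  have carr: "x \<in> carrier G0 \<longleftrightarrow> (\<exists>p j q k. x = rep Z p j q k)" for x
    unfolding G0_def using S_char[OF S] by simp
  have grp: "group G0"
  proof (rule groupI)
    fix x y assume "x \<in> carrier G0" "y \<in> carrier G0"
    then obtain p j q k p' j' q' k' where x: "x = rep Z p j q k" and y: "y = rep Z p' j' q' k'"
      unfolding carr by blast
    have "x \<otimes>\<^bsub>G0\<^esub> y = rep Z (p+p') (j+j') (q+q') (k+k')" by (simp add: G0_def x y rep_add)
    then show "x \<otimes>\<^bsub>G0\<^esub> y \<in> carrier G0" unfolding carr by blast
  next
    show "\<one>\<^bsub>G0\<^esub> \<in> carrier G0" unfolding carr by (metis rep_zero monoid.select_convs(2) G0_def)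
  next
    fix x y z assume "x \<in> carrier G0" "y \<in> carrier G0" "z \<in> carrier G0"
    show "x \<otimes>\<^bsub>G0\<^esub> y \<otimes>\<^bsub>G0\<^esub> z = x \<otimes>\<^bsub>G0\<^esub> (y \<otimes>\<^bsub>G0\<^esub> z)"
      by (simp add: G0_def add.assoc)
  next
    fix x assume "x \<in> carrier G0"
    show "\<one>\<^bsub>G0\<^esub> \<otimes>\<^bsub>G0\<^esub> x = x" by (simp add: G0_def)
  next
    fix x assume "x \<in> carrier G0"
    then obtain p j q k where x: "x = rep Z p j q k" unfolding carr by blast
    have "- x \<in> carrier G0" unfolding carr x rep_neg by blast
    moreover have "- x \<otimes>\<^bsub>G0\<^esub> x = \<one>\<^bsub>G0\<^esub>" by (simp add: G0_def)
    ultimately show "\<exists>y\<in>carrier G0. y \<otimes>\<^bsub>G0\<^esub> x = \<one>\<^bsub>G0\<^esub>" by blast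
  qed
  have grpH: "group H" unfolding H_def by (simp add: DirProd_group)
  have hom: "group_hom G0 H (phiK Z)"
  proof -
    have "phiK Z \<in> hom G0 H"
    proof (rule homI)
      fix x assume "x \<in> carrier G0"
      then obtain p j q k where x: "x = rep Z p j q k" unfolding carr by blast
      show "phiK Z x \<in> carrier H"
        unfolding x phiK_rep[OF S] H_def by (simp add: carrier_integer_mod_group)
    next
      fix x y assume "x \<in> carrier G0" "y \<in> carrier G0"
      then obtain p j q k p' j' q' k' where x: "x = rep Z p j q k" and y: "y = rep Z p' j' q' k'"
        unfolding carr by blast
      show "phiK Z (x \<otimes>\<^bsub>G0\<^esub> y) = phiK Z x \<otimes>\<^bsub>H\<^esub> phiK Z y"
        unfolding H_def by (simp add: G0_def x y rep_add phiK_rep[OF S] DirProd_def mod_add_eq)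
    qed
    then show ?thesis using grp grpH unfolding group_hom_def group_hom_axioms_def by blast
  qed
  have surj: "phiK Z ` carrier G0 = carrier H"
  proof
    show "phiK Z ` carrier G0 \<subseteq> carrier H"
      using hom unfolding group_hom_def group_hom_axioms_def hom_def by auto
  next
    show "carrier H \<subseteq> phiK Z ` carrier G0"
    proof
      fix z assume "z \<in> carrier H"
      then obtain x y where z: "z = (x, y)" and xy: "x \<in> {0..<2}" "y \<in> {0..<2}"
        unfolding H_def by (auto simp: carrier_integer_mod_group)
      have "rep Z 0 x 0 (- y) \<in> carrier G0" unfolding carr by blast
      moreover have "phiK Z (rep Z 0 x 0 (- y)) = z" unfolding phiK_rep[OF S] z using xy by simp
      ultimately show "z \<in> phiK Z ` carrier G0" by (metis imageI)
    qed
  qed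
  have ker: "kernel G0 H (phiK Z) = lattice Z"
  proof
    show "kernel G0 H (phiK Z) \<subseteq> lattice Z"
    proof
      fix x assume "x \<in> kernel G0 H (phiK Z)"
      then have xc: "x \<in> carrier G0" and x1: "phiK Z x = (0, 0)"
        unfolding kernel_def H_def by (auto simp: DirProd_def)
      from xc obtain p j q k where x: "x = rep Z p j q k" unfolding carr by blast
      from x1 have "j mod 2 = 0" "(- k) mod 2 = 0" unfolding x phiK_rep[OF S] by auto
      then obtain r s where "j = 2 * r" "k = 2 * s" by (metis dvd_def dvd_minus_iff mod_0_imp_dvd)
      then show "x \<in> lattice Z" unfolding x lattice_rep by blast
    qed
  next
    show "lattice Z \<subseteq> kernel G0 H (phiK Z)"
    proof
      fix x assume "x \<in> lattice Z"
      then obtain p r q s where x: "x = rep Z p (2 * r) q (2 * s)" unfolding lattice_rep by blast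
      have "x \<in> carrier G0" unfolding carr x by blast
      moreover have "phiK Z x = \<one>\<^bsub>H\<^esub>" unfolding x phiK_rep[OF S] H_def by (simp add: DirProd_def)
      ultimately show "x \<in> kernel G0 H (phiK Z)" unfolding kernel_def by blast
    qed
  qed
  have "G0 Mod lattice Z \<cong> H" using group_hom.FactGroup_iso[OF hom surj] unfolding ker .
  then show "KA2_group Z \<cong> (integer_mod_group 2 \<times>\<times> integer_mod_group 2)"
    unfolding KA2_group_def G0_def H_def .
qed

end
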